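(* Let $\mathcal G$ be a CFG and $\sigma$ a state of $\mathcal G$ with $\Pr_{term}(\mathcal G(\sigma))>0$. Then there is $N\in\mathbb N$ such that for every scheduler $\mathfrak s$ there exists a finite path of length at most $N$ that starts at $\sigma$, ends at the terminal state $\sigma_\bot$, and is consistent with $\mathfrak s$. In other words, the length of the shortest terminating finite path from $\sigma$ consistent with $\mathfrak s$ is bounded uniformly over all schedulers $\mathfrak s$.
   Context: A probabilistic control flow graph (CFG) is a tuple $\mathcal G=(L,V,l_{init},\mathbf x_{init},\mapsto,G,\mathsf{Pr},\mathsf{Upd})$. Here $L$ is a finite set of locations, partitioned into assignment, nondeterministic and probabilistic locations. $V=\{x_1,\dots,x_n\}$ is a finite set of variables ranging over $\mathbb Q$. $l_{init}\in L$ and $\mathbf x_{init}\in\mathbb Q^V$. $\mapsto\subseteq L\times L$ is a finite set of transitions. $G$ assigns to each transition a Boolean guard, namely a Boolean combination of arithmetic atomic formulas over the variables. $\mathsf{Pr}$ assigns to each transition leaving a probabilistic location a rational arithmetic expression over $V$; at every valuation each of these values is $>0$, and the values of the enabled outgoing transitions sum to $1$. $\mathsf{Upd}$ assigns to each transition leaving an assignment location an update $(j,u)$, with $u$ an arithmetic expression; assignment locations have at most one outgoing transition. A state is a pair $(l,\mathbf x)$. A transition $(l,l')$ is enabled at $(l,\mathbf x)$ if its guard holds there; in that case $(l',\mathbf x')$ is a successor, where $\mathbf x'=\mathbf x$, except that for an assignment location $\mathbf x'[j]=u(\mathbf x)$. Every state has at least one, and hence finitely many, successors. A finite path is a sequence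 of states in which each state is a successor of the previous one. A run is an infinite such sequence starting at the initial state. A scheduler $\mathfrak s$ maps each finite path ending at a nondeterministic state to a successor of that state; no measurability restriction is imposed. A path is consistent with $\mathfrak s$ if every nondeterministic step in it follows $\mathfrak s$. Each scheduler $\mathfrak s$ induces a probability measure $\mathbb P_{\mathfrak s}$ on runs, generated by cylinder sets: probabilistic states move to successors with probabilities given by $\mathsf{Pr}$, and nondeterministic choices follow $\mathfrak s$. $\mathcal G(\sigma)$ denotes $\mathcal G$ with initial state $\sigma$. There is a distinguished terminal state $\sigma_\bot=(l_{out},\mathbf 0)$. The termination probability is $\Pr_{term}(\mathcal G)=\inf_{\mathfrak s}\mathbb P_{\mathfrak s}[\Diamond\sigma_\bot]$, where $\Diamond\sigma_\bot$ is the set of runs that visit $\sigma_\bot$. *)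

theory Defs
  imports "HOL-Library.Extended_Nonnegative_Real"
begin

type_synonym 'v valuation = "'v \<Rightarrow> rat"

datatype 'v aexp =
    Const rat
  | Var 'v
  | Neg "'v aexp"
  | Plus "'v aexp" "'v aexp"
  | Minus "'v aexp" "'v aexp"
  | Times "'v aexp" "'v aexp"
  | Divide "'v aexp" "'v aexp"

primrec aval :: "'v aexp \<Rightarrow> 'v valuation \<Rightarrow> rat" where
  "aval (Const c) x = c"
| "aval (Var v) x = x v"
| "aval (Neg a) x = - aval a x"
| "aval (Plus a b) x = aval a x + aval b x"
| "aval (Minus a b) x = aval a x - aval b x"
| "aval (Times a b) x = aval a x * aval b x"
| "aval (Divide a b) x = aval a x / aval b x"

datatype cmp = CLe | CLt | CEq

datatype 'v bexp =
    BTrue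
  | BFalse
  | Atom cmp "'v aexp" "'v aexp"
  | BNot "'v bexp"
  | BAnd "'v bexp" "'v bexp"
  | BOr "'v bexp" "'v bexp"

primrec cval :: "cmp \<Rightarrow> rat \<Rightarrow> rat \<Rightarrow> bool" where
  "cval CLe a b = (a \<le> b)"
| "cval CLt a b = (a < b)"
| "cval CEq a b = (a = b)"

primrec bval :: "'v bexp \<Rightarrow> 'v valuation \<Rightarrow> bool" where
  "bval BTrue x = True"
| "bval BFalse x = False"
| "bval (Atom c a b) x = cval c (aval a x) (aval b x)"
| "bval (BNot b) x = (\<not> bval b x)"
| "bval (BAnd b1 b2) x = (bval b1 x \<and> bval b2 x)"
| "bval (BOr b1 b2) x = (bval b1 x \<or> bval b2 x)"

datatype lkind = AssignLoc | NondetLoc | ProbLoc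

text \<open>The set of locations L is the finite type 'l, the set of variables V is the
finite type 'v. The initial state is irrelevant for the statement (which uses G(sigma)).\<close>

record ('l, 'v) cfg =
  kind  :: "'l \<Rightarrow> lkind"
  linit :: 'l
  xinit :: "'v valuation"
  trans :: "('l \<times> 'l) set"
  guard :: "'l \<times> 'l \<Rightarrow> 'v bexp"
  prb   :: "'l \<times> 'l \<Rightarrow> 'v aexp"
  upd   :: "'l \<times> 'l \<Rightarrow> 'v \<times> 'v aexp"
  lout  :: 'l

type_synonym ('l, 'v) state = "'l \<times> 'v valuation"

definition enabled :: "('l, 'v) cfg \<Rightarrow> 'l \<times> 'l \<Rightarrow> 'v valuation \<Rightarrow> bool" where
  "enabled G t x \<longleftrightarrow> t \<in> trans G \<and> bval (guard G t) x"

definition succ :: "('l, 'v) cfg \<Rightarrow> ('l, 'v) state \<Rightarrow> ('l, 'v) state \<Rightarrow> bool" where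
  "succ G s s' \<longleftrightarrow>
     enabled G (fst s, fst s') (snd s) \<and>
     snd s' = (if kind G (fst s) = AssignLoc
               then (let (j, u) = upd G (fst s, fst s') in (snd s)(j := aval u (snd s)))
               else snd s)"

definition wf_cfg :: "('l, 'v) cfg \<Rightarrow> bool" where
  "wf_cfg G \<longleftrightarrow>
     (\<forall>l. kind G l = AssignLoc \<longrightarrow> card {l'. (l, l') \<in> trans G} \<le> 1) \<and>
     (\<forall>l l' x. kind G l = ProbLoc \<longrightarrow> (l, l') \<in> trans G \<longrightarrow> aval (prb G (l, l')) x > 0) \<and>
     (\<forall>l x. kind G l = ProbLoc \<longrightarrow>
        (\<Sum>l' \<in> {l'. enabled G (l, l') x}. aval (prb G (l, l')) x) = 1) \<and>
     (\<forall>s. \<exists>s'. succ G s s')"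

definition is_path :: "('l, 'v) cfg \<Rightarrow> ('l, 'v) state list \<Rightarrow> bool" where
  "is_path G \<pi> \<longleftrightarrow> \<pi> \<noteq> [] \<and> (\<forall>i. Suc i < length \<pi> \<longrightarrow> succ G (\<pi> ! i) (\<pi> ! Suc i))"

text \<open>Schedulers: arbitrary (not necessarily measurable) maps from finite paths ending in a
nondeterministic state to a successor of that state.\<close>

definition schedulers :: "('l, 'v) cfg \<Rightarrow> (('l, 'v) state list \<Rightarrow> ('l, 'v) state) set" where
  "schedulers G = {sch. \<forall>\<pi>. is_path G \<pi> \<longrightarrow> kind G (fst (last \<pi>)) = NondetLoc
                              \<longrightarrow> succ G (last \<pi>) (sch \<pi>)}"

definition consistent ::
  "('l, 'v) cfg \<Rightarrow> (('l, 'v) state list \<Rightarrow> ('l, 'v) state) \<Rightarrow> ('l, 'v) state list \<Rightarrow> bool" where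
  "consistent G sch \<pi> \<longleftrightarrow>
     (\<forall>i. Suc i < length \<pi> \<longrightarrow> kind G (fst (\<pi> ! i)) = NondetLoc \<longrightarrow>
          \<pi> ! Suc i = sch (take (Suc i) \<pi>))"

definition step_prob ::
  "('l, 'v) cfg \<Rightarrow> (('l, 'v) state list \<Rightarrow> ('l, 'v) state) \<Rightarrow> ('l, 'v) state list \<Rightarrow> nat \<Rightarrow> ennreal" where
  "step_prob G sch \<pi> i =
     (case kind G (fst (\<pi> ! i)) of
        ProbLoc \<Rightarrow> ennreal (real_of_rat (aval (prb G (fst (\<pi> ! i), fst (\<pi> ! Suc i))) (snd (\<pi> ! i))))
      | NondetLoc \<Rightarrow> (if \<pi> ! Suc i = sch (take (Suc i) \<pi>) then 1 else 0)
      | AssignLoc \<Rightarrow> 1)"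

text \<open>Measure P_sch of the cylinder set of runs extending the finite path pi (pi starts at the
initial state of G(sigma)).\<close>

definition cyl_prob ::
  "('l, 'v) cfg \<Rightarrow> (('l, 'v) state list \<Rightarrow> ('l, 'v) state) \<Rightarrow> ('l, 'v) state list \<Rightarrow> ennreal" where
  "cyl_prob G sch \<pi> = (\<Prod>i < length \<pi> - 1. step_prob G sch \<pi> i)"

definition term_state :: "('l, 'v) cfg \<Rightarrow> ('l, 'v) state" where
  "term_state G = (lout G, (\<lambda>_. 0))"

text \<open>P_sch[ \<diamond> sigma_bot ] in G(sigma): the event of visiting sigma_bot is the increasing union
over n of the events "sigma_bot visited among the first n+1 states", each of which is the
disjoint union of the cylinder sets of the paths of n steps from sigma that visit sigma_bot.\<close>

definition reach_prob ::
  "('l, 'v) cfg \<Rightarrow> ('l, 'v) state \<Rightarrow> (('l, 'v) state list \<Rightarrow> ('l, 'v) state) \<Rightarrow> ennreal" where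
  "reach_prob G \<sigma> sch =
     (SUP n. \<Sum>\<pi> \<in> {\<pi>. is_path G \<pi> \<and> hd \<pi> = \<sigma> \<and> length \<pi> = Suc n \<and> term_state G \<in> set \<pi>}.
               cyl_prob G sch \<pi>)"

definition pr_term :: "('l, 'v) cfg \<Rightarrow> ('l, 'v) state \<Rightarrow> ennreal" where
  "pr_term G \<sigma> = (INF sch \<in> schedulers G. reach_prob G \<sigma> sch)"

end

theory Submission imports Defs begin

fun Tf :: "('l,'v) cfg \<Rightarrow> nat \<Rightarrow> ('l,'v) state list \<Rightarrow> bool" where
  "Tf G 0 \<pi> = (last \<pi> = term_state G)"
| "Tf G (Suc k) \<pi> = (last \<pi> = term_state G \<or>
     (if kind G (fst (last \<pi>)) = NondetLoc
      then (\<forall>s. succ G (last \<pi>) s \<longrightarrow> Tf G k (\<pi> @ [s]))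
      else (\<exists>s. succ G (last \<pi>) s \<and> Tf G k (\<pi> @ [s]))))"

lemma Tf_Suc: "Tf G k \<pi> \<Longrightarrow> Tf G (Suc k) \<pi>"
proof (induction k arbitrary: \<pi>)
  case 0
  then show ?case by simp
next
  case (Suc k)
  show ?case
  proof (cases "last \<pi> = term_state G")
    case True then show ?thesis by simp
  next
    case False
    show ?thesis
    proof (cases "kind G (fst (last \<pi>)) = NondetLoc")
      case True
      then have "\<forall>s. succ G (last \<pi>) s \<longrightarrow> Tf G k (\<pi> @ [s])" using Suc.prems False by simp
      then have "\<forall>s. succ G (last \<pi>) s \<longrightarrow> Tf G (Suc k) (\<pi> @ [s])" using Suc.IH by blast
      then show ?thesis using True by (simp del: Tf.simps(2)) (simp only: Tf.simps(2), simp add: True)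
    next
      case nn: False
      then obtain s where "succ G (last \<pi>) s" "Tf G k (\<pi> @ [s])" using Suc.prems False by auto
      then have "succ G (last \<pi>) s \<and> Tf G (Suc k) (\<pi> @ [s])" using Suc.IH by blast
      then show ?thesis by (simp only: Tf.simps(2) nn if_False) blast
    qed
  qed
qed

lemma Tf_mono: assumes "Tf G k \<pi>" "k \<le> m" shows "Tf G m \<pi>"
  using assms(2,1) by (induction m rule: dec_induct) (blast intro: Tf_Suc)+

lemma is_path_snoc: "is_path G \<pi> \<Longrightarrow> succ G (last \<pi>) s \<Longrightarrow> is_path G (\<pi> @ [s])"
  unfolding is_path_def
proof (intro conjI allI impI)
  fix i assume a: "\<pi> \<noteq> [] \<and> (\<forall>i. Suc i < length \<pi> \<longrightarrow> succ G (\<pi> ! i) (\<pi> ! Suc i))"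
    "succ G (last \<pi>) s" "Suc i < length (\<pi> @ [s])"
  show "succ G ((\<pi> @ [s]) ! i) ((\<pi> @ [s]) ! Suc i)"
  proof (cases "Suc i < length \<pi>")
    case True then show ?thesis using a by (simp add: nth_append)
  next
    case False
    then have "Suc i = length \<pi>" using a by simp
    then have "i = length \<pi> - 1" "\<not> Suc i < length \<pi>" by auto
    then show ?thesis using a by (simp add: nth_append last_conv_nth)
  qed
qed simp

lemma succ_finite:
  "finite {s'. succ G (s::('l::finite,'v) state) s'}"
proof -
  have "{s'. succ G s s'} \<subseteq> (\<lambda>l. (l, if kind G (fst s) = AssignLoc
               then (let (j, u) = upd G (fst s, l) in (snd s)(j := aval u (snd s)))
               else snd s)) ` UNIV"
    by (auto simp: succ_def image_iff intro!: prod_eqI)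
  then show ?thesis by (rule finite_subset) simp
qed

lemma lemA:
  assumes "Tf G k \<pi>" "is_path G \<pi>" "sch \<in> schedulers G"
  shows "\<exists>\<rho>. length \<rho> \<le> k \<and> is_path G (\<pi>@\<rho>) \<and> last (\<pi>@\<rho>) = term_state G \<and>
     (\<forall>i. length \<pi> \<le> Suc i \<longrightarrow> Suc i < length (\<pi>@\<rho>) \<longrightarrow> kind G (fst ((\<pi>@\<rho>)!i)) = NondetLoc
        \<longrightarrow> (\<pi>@\<rho>)!Suc i = sch (take (Suc i) (\<pi>@\<rho>)))"
  using assms(1,2)
proof (induction k arbitrary: \<pi>)
  case 0
  then show ?case by (intro exI[of _ "[]"]) auto
next
  case (Suc k)
  have ne: "\<pi> \<noteq> []" using Suc.prems is_path_def by blast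
  show ?case
  proof (cases "last \<pi> = term_state G")
    case True
    then show ?thesis using Suc.prems by (intro exI[of _ "[]"]) auto
  next
    case nt: False
    obtain s where s: "succ G (last \<pi>) s" "Tf G k (\<pi>@[s])"
      and sn: "kind G (fst (last \<pi>)) = NondetLoc \<Longrightarrow> s = sch \<pi>"
    proof (cases "kind G (fst (last \<pi>)) = NondetLoc")
      case True
      have "succ G (last \<pi>) (sch \<pi>)" using assms(3) Suc.prems True unfolding schedulers_def by blast
      moreover have "\<forall>s. succ G (last \<pi>) s \<longrightarrow> Tf G k (\<pi>@[s])" using Suc.prems(1) nt True by simp
      ultimately show ?thesis using that True by blast
    next
      case False
      then show ?thesis using that Suc.prems nt by auto
    qed
    have p: "is_path G (\<pi>@[s])" using is_path_snoc Suc.prems s by blast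
    obtain \<rho> where r: "length \<rho> \<le> k" "is_path G ((\<pi>@[s])@\<rho>)" "last ((\<pi>@[s])@\<rho>) = term_state G"
      "\<forall>i. length (\<pi>@[s]) \<le> Suc i \<longrightarrow> Suc i < length ((\<pi>@[s])@\<rho>) \<longrightarrow> kind G (fst (((\<pi>@[s])@\<rho>)!i)) = NondetLoc
        \<longrightarrow> ((\<pi>@[s])@\<rho>)!Suc i = sch (take (Suc i) ((\<pi>@[s])@\<rho>))"
      using Suc.IH[OF s(2) p] by blast
    show ?thesis
    proof (intro exI[of _ "s#\<rho>"] conjI allI impI)
      show "length (s # \<rho>) \<le> Suc k" using r by simp
      show "is_path G (\<pi> @ s # \<rho>)" using r by simp
      show "last (\<pi> @ s # \<rho>) = term_state G" using r by simp
    next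
      fix i assume i: "length \<pi> \<le> Suc i" "Suc i < length (\<pi> @ s # \<rho>)"
        "kind G (fst ((\<pi> @ s # \<rho>) ! i)) = NondetLoc"
      show "(\<pi> @ s # \<rho>) ! Suc i = sch (take (Suc i) (\<pi> @ s # \<rho>))"
      proof (cases "Suc i = length \<pi>")
        case True
        have "(\<pi> @ s # \<rho>) ! i = last \<pi>" using True ne
          by (metis diff_Suc_1 last_conv_nth lessI nth_append)
        then show ?thesis using True sn i by simp
      next
        case False
        then show ?thesis using r(4) i by simp
      qed
    qed
  qed
qed

lemma exists_good:
  fixes \<pi> :: "('l::finite,'v) state list"
  assumes "kind G (fst (last \<pi>)) = NondetLoc" "\<forall>k. \<not> Tf G k \<pi>"
  shows "\<exists>s. succ G (last \<pi>) s \<and> (\<forall>k. \<not> Tf G k (\<pi>@[s]))"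
proof (rule ccontr)
  assume "\<not> ?thesis"
  then have "\<forall>s\<in>{s. succ G (last \<pi>) s}. \<exists>k. Tf G k (\<pi>@[s])" by blast
  then obtain f where f: "\<forall>s\<in>{s. succ G (last \<pi>) s}. Tf G (f s) (\<pi>@[s])" by metis
  define K where "K = Max (insert 0 (f ` {s. succ G (last \<pi>) s}))"
  have fin: "finite (insert 0 (f ` {s. succ G (last \<pi>) s}))" using succ_finite by blast
  have "\<forall>s. succ G (last \<pi>) s \<longrightarrow> Tf G K (\<pi>@[s])"
  proof (intro allI impI)
    fix s assume s: "succ G (last \<pi>) s"
    have "f s \<le> K" unfolding K_def using fin s by (intro Max_ge) auto
    then show "Tf G K (\<pi>@[s])" using f s Tf_mono by blast
  qed
  then have "Tf G (Suc K) \<pi>" using assms(1) by simp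
  then show False using assms(2) by blast
qed

definition sch0 :: "('l,'v) cfg \<Rightarrow> ('l,'v) state list \<Rightarrow> ('l,'v) state" where
  "sch0 G = (\<lambda>\<pi>. if (\<exists>s. succ G (last \<pi>) s \<and> (\<forall>k. \<not> Tf G k (\<pi>@[s])))
     then (SOME s. succ G (last \<pi>) s \<and> (\<forall>k. \<not> Tf G k (\<pi>@[s])))
     else (SOME s. succ G (last \<pi>) s))"

lemma sch0_succ:
  assumes "wf_cfg G" shows "succ G (last \<pi>) (sch0 G \<pi>)"
proof (cases "\<exists>s. succ G (last \<pi>) s \<and> (\<forall>k. \<not> Tf G k (\<pi>@[s]))")
  case True
  then show ?thesis unfolding sch0_def using someI_ex[OF True] by simp
next
  case False
  have "\<exists>s. succ G (last \<pi>) s" using assms unfolding wf_cfg_def by blast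
  then have "succ G (last \<pi>) (SOME s. succ G (last \<pi>) s)" by (rule someI_ex)
  then show ?thesis unfolding sch0_def using False by (simp only: if_False)
qed

lemma sch0_sched: "wf_cfg G \<Longrightarrow> sch0 G \<in> schedulers G"
  unfolding schedulers_def using sch0_succ by blast

lemma lemD:
  fixes \<pi> :: "('l::finite,'v) state list"
  assumes "is_path G \<pi>" "hd \<pi> = \<sigma>" "consistent G (sch0 G) \<pi>" "\<forall>k. \<not> Tf G k [\<sigma>]"
  shows "i < length \<pi> \<Longrightarrow> \<forall>k. \<not> Tf G k (take (Suc i) \<pi>)"
proof (induction i)
  case 0
  have "take (Suc 0) \<pi> = [\<sigma>]" using 0 assms(2) by (cases \<pi>) auto
  then show ?case using assms(4) by simp
next
  case (Suc i)
  define p where "p = take (Suc i) \<pi>"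
  have IH: "\<forall>k. \<not> Tf G k p" using Suc p_def by simp
  have tk: "take (Suc (Suc i)) \<pi> = p @ [\<pi> ! Suc i]" unfolding p_def using Suc.prems
    by (simp add: take_Suc_conv_app_nth)
  have lp: "last p = \<pi> ! i" unfolding p_def using Suc.prems
    by (simp add: take_Suc_conv_app_nth)
  have sc: "succ G (last p) (\<pi> ! Suc i)" using assms(1) Suc.prems lp unfolding is_path_def by simp
  show ?case
  proof (cases "kind G (fst (last p)) = NondetLoc")
    case True
    have eq: "\<pi> ! Suc i = sch0 G p" using assms(3) Suc.prems True lp unfolding consistent_def p_def by simp
    have ex: "\<exists>s. succ G (last p) s \<and> (\<forall>k. \<not> Tf G k (p@[s]))"
      using exists_good[OF True IH] .
    have "\<forall>k. \<not> Tf G k (p@[sch0 G p])" unfolding sch0_def using someI_ex[OF ex] ex by simp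
    then show ?thesis using tk eq by simp
  next
    case False
    show ?thesis
    proof
      fix k
      have "\<not> Tf G (Suc k) p" using IH by blast
      then have "\<not> (\<exists>s. succ G (last p) s \<and> Tf G k (p@[s]))" using False by simp
      then have "\<not> Tf G k (p @ [\<pi> ! Suc i])" using sc by blast
      then show "\<not> Tf G k (take (Suc (Suc i)) \<pi>)" using tk by simp
    qed
  qed
qed

theorem mainTheorem1:
  fixes G :: "('l::finite, 'v::finite) cfg" and \<sigma> :: "('l, 'v) state"
  assumes "wf_cfg G"
    and "pr_term G \<sigma> > 0"
  shows "\<exists>N::nat. \<forall>sch \<in> schedulers G. \<exists>\<pi>.
           is_path G \<pi> \<and> hd \<pi> = \<sigma> \<and> last \<pi> = term_state G \<and>
           length \<pi> \<le> Suc N \<and> consistent G sch \<pi>"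
proof (cases "\<exists>k. Tf G k [\<sigma>]")
  case True
  then obtain k where k: "Tf G k [\<sigma>]" by blast
  have p1: "is_path G [\<sigma>]" unfolding is_path_def by simp
  show ?thesis
  proof (intro exI[of _ k] ballI)
    fix sch assume sch: "sch \<in> schedulers G"
    obtain \<rho> where r: "length \<rho> \<le> k" "is_path G ([\<sigma>]@\<rho>)" "last ([\<sigma>]@\<rho>) = term_state G"
     "\<forall>i. length [\<sigma>] \<le> Suc i \<longrightarrow> Suc i < length ([\<sigma>]@\<rho>) \<longrightarrow> kind G (fst (([\<sigma>]@\<rho>)!i)) = NondetLoc
        \<longrightarrow> ([\<sigma>]@\<rho>)!Suc i = sch (take (Suc i) ([\<sigma>]@\<rho>))"
      using lemA[OF k p1 sch] by blast
    show "\<exists>\<pi>. is_path G \<pi> \<and> hd \<pi> = \<sigma> \<and> last \<pi> = term_state G \<and>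
           length \<pi> \<le> Suc k \<and> consistent G sch \<pi>"
      apply (rule exI[of _ "[\<sigma>]@\<rho>"])
      using r unfolding consistent_def by simp
  qed
next
  case False
  then have nT: "\<forall>k. \<not> Tf G k [\<sigma>]" by blast
  let ?S = "{\<pi>. is_path G \<pi> \<and> hd \<pi> = \<sigma> \<and> term_state G \<in> set \<pi>}"
  have z: "cyl_prob G (sch0 G) \<pi> = 0" if \<pi>: "\<pi> \<in> ?S" for \<pi>
  proof -
    have "\<not> consistent G (sch0 G) \<pi>"
    proof
      assume c: "consistent G (sch0 G) \<pi>"
      obtain i where i: "i < length \<pi>" "\<pi> ! i = term_state G" using \<pi> by (auto simp: in_set_conv_nth)
      have "\<not> Tf G 0 (take (Suc i) \<pi>)" using lemD[of G \<pi> \<sigma> i] \<pi> c nT i by blast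
      moreover have "last (take (Suc i) \<pi>) = \<pi> ! i" using i by (simp add: take_Suc_conv_app_nth)
      ultimately show False using i by simp
    qed
    then obtain i where i: "Suc i < length \<pi>" "kind G (fst (\<pi> ! i)) = NondetLoc"
      "\<pi> ! Suc i \<noteq> sch0 G (take (Suc i) \<pi>)" unfolding consistent_def by blast
    have "step_prob G (sch0 G) \<pi> i = 0" using i unfolding step_prob_def by simp
    moreover have "i \<in> {..<length \<pi> - 1}" using i by simp
    ultimately show ?thesis unfolding cyl_prob_def by (intro prod_zero) auto
  qed
  have "reach_prob G \<sigma> (sch0 G) = 0" unfolding reach_prob_def
    using z by simp
  moreover have "pr_term G \<sigma> \<le> reach_prob G \<sigma> (sch0 G)"
    unfolding pr_term_def using sch0_sched[OF assms(1)] by (rule INF_lower)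
  ultimately show ?thesis using assms(2) by simp
qed

end
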